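(* The set $\{A(\mathbf j,r)\mid A\in\Xi^\pm(\infty),\ \mathbf j\in\mathbb N^\infty,\ \sigma(\mathbf j)+\sigma(A)\le r\}$ is a $\mathbb Q(v)$-basis of $\mathbf V(\infty,r)$.
   Context: $v$ indeterminate, $\mathcal Z=\mathbb Z[v,v^{-1}]$. Matrices are $\mathbb Z\times\mathbb Z$ of finite support; $\Xi(\infty,r)$: nonnegative integer matrices with entry sum $r$; $\Xi^\pm(\infty)$: nonnegative integer matrices with zero diagonal; $\sigma(A)$ the entry sum; $ro(A)$, $co(A)$ the row/column sum sequences. $\mathbb Z^\infty$, $\mathbb N^\infty$: finitely supported integer / nonnegative integer sequences indexed by $\mathbb Z$; $\sigma(\mathbf j)=\sum_ij_i$. $\mathcal K(\infty,r)$: for a finite field with $q$ elements and an $r$-dimensional space $V$, a $\mathbb Z$-step flag is $(V_i)_{i\in\mathbb Z}$, $V_i\subseteq V_{i+1}$, $V_i=0$ for $i\ll0$, $\bigcup V_i=V$; $GL(V)$-orbits $\mathcal O_A$ on pairs of flags correspond to $A\in\Xi(\infty,r)$ via $a_{ij}=\dim(V_{i-1}+V_i\cap V'_j)-\dim(V_{i-1}+V_i\cap V'_{j-1})$; for $(f_1,f_2)\in\mathcal O_C$ the number of $f$ with $(f_1,f)\in\mathcal O_A$, $(f,f_2)\in\mathcal O_B$ is $g_{A,B,C}|_{v^2=q}$ for some $g_{A,B,C}\in\mathbb Z[v^2]$. $\mathcal K(\infty,r)$ is the free $\mathcal Z$-module on $\{e_A\}_{A\in\Xi(\infty,r)}$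 with $e_Ae_B=\sum_Cg_{A,B,C}e_C$; $[A]=v^{-d_A}e_A$, $d_A=\sum_{i\ge k,j<l}a_{ij}a_{kl}$. $\widehat{\boldsymbol{\mathcal K}}(\infty,r)$ is the $\mathbb Q(v)$-algebra of formal sums $\sum_A\beta_A[A]$ such that for each $\lambda$ only finitely many $A$ with $\beta_A\ne0$ have $ro(A)=\lambda$ and only finitely many have $co(A)=\lambda$, with product extended bilinearly. For $A\in\Xi^\pm(\infty)$ and $\mathbf j\in\mathbb Z^\infty$, $A(\mathbf j,r)=\sum_{\lambda\in\mathbb N^\infty,\sigma(A)+\sigma(\lambda)=r}v^{\sum_i\lambda_ij_i}[A+\operatorname{diag}(\lambda)]$. $\mathbf V(\infty,r)$ is the $\mathbb Q(v)$-span of all $A(\mathbf j,r)$ with $A\in\Xi^\pm(\infty)$, $\mathbf j\in\mathbb Z^\infty$. *)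

theory Defs
  imports Main "HOL-Library.Function_Algebras" "HOL-Computational_Algebra.Polynomial"
    "HOL-Computational_Algebra.Fraction_Field"
begin

type_synonym Qv = "rat poly fract"

definition vv :: Qv where "vv = Fract [:0, 1:] 1"

type_synonym zmat = "int \<Rightarrow> int \<Rightarrow> nat"

definition fin_supp_seq :: "(int \<Rightarrow> 'a::zero) \<Rightarrow> bool" where
  "fin_supp_seq f \<longleftrightarrow> finite {i. f i \<noteq> 0}"

definition fin_supp_mat :: "zmat \<Rightarrow> bool" where
  "fin_supp_mat A \<longleftrightarrow> finite {(i, k). A i k \<noteq> 0}"

definition sigma_seq :: "(int \<Rightarrow> 'a::comm_monoid_add) \<Rightarrow> 'a" where
  "sigma_seq f = (\<Sum>i\<in>{i. f i \<noteq> 0}. f i)"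

definition sigma_mat :: "zmat \<Rightarrow> nat" where
  "sigma_mat A = (\<Sum>(i, k)\<in>{(i, k). A i k \<noteq> 0}. A i k)"

definition Xi_pm :: "zmat set" where
  "Xi_pm = {A. fin_supp_mat A \<and> (\<forall>i. A i i = 0)}"

definition N_inf :: "(int \<Rightarrow> nat) set" where
  "N_inf = {l. fin_supp_seq l}"

definition Z_inf :: "(int \<Rightarrow> int) set" where
  "Z_inf = {j. fin_supp_seq j}"

definition diagm :: "(int \<Rightarrow> nat) \<Rightarrow> zmat" where
  "diagm l = (\<lambda>i k. if i = k then l i else 0)"

text \<open>Formal sums sum_A beta_A [A] in the completion K^(infinity,r) are represented by
  their coefficient functions A |-> beta_A (relative to the basis {[A]}).
  The vector space structure is pointwise.\<close>
type_synonym formal_sum = "zmat \<Rightarrow> Qv"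

definition fscale :: "Qv \<Rightarrow> formal_sum \<Rightarrow> formal_sum" where
  "fscale c f = (\<lambda>M. c * f M)"

text \<open>A(j,r) = sum over lambda in N^infinity with sigma(A)+sigma(lambda)=r of
  v^(sum_i lambda_i j_i) [A + diag(lambda)]; its coefficient at [M] is the sum
  of the coefficients of all terms with A + diag(lambda) = M.\<close>
definition Ajr :: "zmat \<Rightarrow> (int \<Rightarrow> int) \<Rightarrow> nat \<Rightarrow> formal_sum" where
  "Ajr A j r = (\<lambda>M. \<Sum>l\<in>{l. l \<in> N_inf \<and> sigma_mat A + sigma_seq l = r
        \<and> M = (\<lambda>i k. A i k + diagm l i k)}.
      vv powi (\<Sum>i\<in>{i. l i \<noteq> 0}. int (l i) * j i))"

definition Vr :: "nat \<Rightarrow> formal_sum set" where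
  "Vr r = module.span fscale {Ajr A j r | A j. A \<in> Xi_pm \<and> j \<in> Z_inf}"

end

theory Submission imports Defs begin

definition fs :: "Qv \<Rightarrow> ('a \<Rightarrow> Qv) \<Rightarrow> ('a \<Rightarrow> Qv)" where "fs c f = (\<lambda>x. c * f x)"

interpretation fsv: vector_space "fs :: Qv \<Rightarrow> ('a \<Rightarrow> Qv) \<Rightarrow> ('a \<Rightarrow> Qv)"
  by unfold_locales (auto simp: fs_def algebra_simps fun_eq_iff)

lemma fscale_fs: "fscale = fs" by (auto simp: fscale_def fs_def fun_eq_iff)

lemma sum_fun_app: "(sum f A) x = (\<Sum>a\<in>A. f a x)"
  by (induct A rule: infinite_finite_induct) auto

lemma fs_app[simp]: "fs c f x = c * f x" by (simp add: fs_def)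

lemma span_lin:
  fixes f :: "('a \<Rightarrow> Qv) \<Rightarrow> ('b \<Rightarrow> Qv)"
  assumes "\<And>x y. f (x + y) = f x + f y" "\<And>c x. f (fs c x) = fs c (f x)"
  shows "f ` fsv.span S = fsv.span (f ` S)"
proof -
  have "module_hom (fs :: Qv \<Rightarrow> ('a \<Rightarrow> Qv) \<Rightarrow> ('a \<Rightarrow> Qv)) (fs :: Qv \<Rightarrow> ('b \<Rightarrow> Qv) \<Rightarrow> ('b \<Rightarrow> Qv)) f"
    by (rule module_hom.intro[OF fsv.module_axioms fsv.module_axioms]) (unfold_locales; rule assms)
  then show ?thesis by (simp add: module_hom.span_image)
qed

lemma span_lin_mem:
  fixes f :: "('a \<Rightarrow> Qv) \<Rightarrow> ('b \<Rightarrow> Qv)"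
  assumes "\<And>x y. f (x + y) = f x + f y" "\<And>c x. f (fs c x) = fs c (f x)"
    and "x \<in> fsv.span S" and "f ` S \<subseteq> fsv.span T"
  shows "f x \<in> fsv.span T"
proof -
  have "f x \<in> fsv.span (f ` S)" using span_lin[OF assms(1,2), of S] assms(3) by auto
  also have "\<dots> \<subseteq> fsv.span T" using assms(4) by (simp add: fsv.span_minimal)
  finally show ?thesis .
qed

lemma span_sub: "S \<subseteq> fsv.span T \<Longrightarrow> x \<in> fsv.span S \<Longrightarrow> x \<in> fsv.span T"
  using fsv.span_minimal by blast

lemma vv_pow: "vv ^ n = Fract ([:0,1:]^n) 1"
  by (induct n) (auto simp: vv_def One_fract_def)

lemma vv_pow_inj: "vv ^ a = vv ^ b \<longleftrightarrow> a = b"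
proof
  assume "vv ^ a = vv ^ b"
  then have "[:0,1:]^a = ([:0,1:]^b :: rat poly)" by (simp add: vv_pow eq_fract)
  then have "degree ([:0,1:]^a :: rat poly) = degree ([:0,1:]^b :: rat poly)" by simp
  then show "a = b" by (simp add: degree_linear_power)
qed simp

lemma vv_nz: "vv \<noteq> 0"
proof
  assume "vv = 0" then have "vv^1 = vv^2" by simp
  then show False by (simp only: vv_pow_inj)
qed

definition supp :: "(int \<Rightarrow> 'a::zero) \<Rightarrow> int set" where "supp f = {i. f i \<noteq> 0}"

definition PP :: "nat \<Rightarrow> Qv poly" where "PP b = (\<Prod>c<b. [:- (vv^c), 1:])"

lemma poly_PP: "poly (PP b) x = (\<Prod>c<b. x - vv^c)"
  by (simp add: PP_def poly_prod)

lemma degree_PP: "degree (PP b) = b"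
  unfolding PP_def by (subst degree_prod_eq_sum_degree) auto

lemma PP_0[simp]: "PP 0 = 1" by (simp add: PP_def)

lemma PP_zero_iff: "poly (PP b) (vv ^ a) = 0 \<longleftrightarrow> a < b"
  by (auto simp: poly_PP vv_pow_inj)

lemma newton:
  fixes h :: "nat \<Rightarrow> Qv"
  shows "\<exists>d. \<forall>a\<le>t. h a = (\<Sum>b\<le>t. d b * poly (PP b) (vv ^ a))"
proof (induct t)
  case 0
  then show ?case by (rule exI[of _ "\<lambda>_. h 0"]) simp
next
  case (Suc t)
  then obtain d where d: "\<forall>a\<le>t. h a = (\<Sum>b\<le>t. d b * poly (PP b) (vv ^ a))" by blast
  define e where "e = (h (Suc t) - (\<Sum>b\<le>t. d b * poly (PP b) (vv ^ Suc t))) / poly (PP (Suc t)) (vv ^ Suc t)"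
  have nz: "poly (PP (Suc t)) (vv ^ Suc t) \<noteq> 0" using PP_zero_iff[of "Suc t" "Suc t"] by simp
  show ?case
  proof (rule exI[of _ "d(Suc t := e)"], intro allI impI)
    fix a assume a: "a \<le> Suc t"
    have s: "(\<Sum>b\<le>Suc t. (d(Suc t := e)) b * poly (PP b) (vv ^ a))
        = (\<Sum>b\<le>t. d b * poly (PP b) (vv ^ a)) + e * poly (PP (Suc t)) (vv ^ a)"
      by (simp add: sum.atMost_Suc)
    show "h a = (\<Sum>b\<le>Suc t. (d(Suc t := e)) b * poly (PP b) (vv ^ a))"
    proof (cases "a = Suc t")
      case True
      then show ?thesis unfolding s using nz by (simp add: e_def)
    next
      case False
      then have "a \<le> t" using a by simp
      then show ?thesis unfolding s using d by (simp add: PP_zero_iff)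
    qed
  qed
qed


lemma pow_swap: "((x::Qv) ^ m) ^ n = (x ^ n) ^ m"
  by (simp add: power_mult[symmetric] mult.commute)

definition gg :: "(int \<Rightarrow> int) \<Rightarrow> (int \<Rightarrow> nat) \<Rightarrow> Qv" where
  "gg j l = (\<Prod>i\<in>supp j. (vv powi j i) ^ l i)"

definition ee :: "int set \<Rightarrow> (int \<Rightarrow> int) \<Rightarrow> (int \<Rightarrow> nat) \<Rightarrow> Qv" where
  "ee S \<mu> l = (\<Prod>i\<in>S. poly (PP (nat (\<mu> i))) (vv ^ l i))"

definition Mi :: "int \<Rightarrow> (nat \<Rightarrow> Qv) \<Rightarrow> ((int\<Rightarrow>nat) \<Rightarrow> Qv) \<Rightarrow> ((int\<Rightarrow>nat)\<Rightarrow>Qv)" where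
  "Mi i h F = (\<lambda>l. F l * h (l i))"

definition Rt :: "nat \<Rightarrow> ((int\<Rightarrow>nat) \<Rightarrow> Qv) \<Rightarrow> ((int\<Rightarrow>nat)\<Rightarrow>Qv)" where
  "Rt t F = (\<lambda>l. if l \<in> N_inf \<and> sigma_seq l = t then F l else 0)"

lemma Mi_add: "Mi i h (x + y) = Mi i h x + Mi i h y"
  by (simp add: Mi_def fun_eq_iff algebra_simps)
lemma Mi_fs: "Mi i h (fs c x) = fs c (Mi i h x)"
  by (simp add: Mi_def fun_eq_iff algebra_simps)
lemma Rt_add: "Rt t (x + y) = Rt t x + Rt t y"
  by (simp add: Rt_def fun_eq_iff algebra_simps)
lemma Rt_fs: "Rt t (fs c x) = fs c (Rt t x)"
  by (simp add: Rt_def fun_eq_iff algebra_simps)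
lemma Mi_Rt: "Mi i h (Rt t F) = Rt t (Mi i h F)"
  by (simp add: Rt_def Mi_def fun_eq_iff)

lemma gg_upd:
  assumes fin: "finite (supp j)" and ji: "j i = 0"
  shows "gg (j(i:=x)) l = gg j l * (vv powi x) ^ (l i)"
proof (cases "x = 0")
  case True
  then have "j(i:=x) = j" using ji by auto
  then show ?thesis using True by simp
next
  case False
  have s: "supp (j(i:=x)) = insert i (supp j)" using False by (auto simp: supp_def)
  have ni: "i \<notin> supp j" using ji by (simp add: supp_def)
  have c: "(\<Prod>k\<in>supp j. (vv powi (j(i:=x)) k) ^ l k) = (\<Prod>k\<in>supp j. (vv powi j k) ^ l k)"
    by (rule prod.cong) (use ni in auto)
  show ?thesis unfolding gg_def s using fin ni c by (simp add: mult.commute)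
qed

lemma le_sigma: "l \<in> N_inf \<Longrightarrow> l i \<le> sigma_seq l"
proof -
  assume "l \<in> N_inf"
  then have fin: "finite {i. l i \<noteq> 0}" by (simp add: N_inf_def fin_supp_seq_def)
  show ?thesis
  proof (cases "l i = 0")
    case False
    then show ?thesis unfolding sigma_seq_def by (intro member_le_sum fin) auto
  qed simp
qed

lemma polydir:
  assumes "finite S" "\<forall>i. 0 \<le> \<mu> i"
  shows "ee S \<mu> \<in> fsv.span {gg j | j. (\<forall>i. 0 \<le> j i \<and> j i \<le> \<mu> i) \<and> (\<forall>i. i \<notin> S \<longrightarrow> j i = 0)}"
  using assms(1)
proof (induct S)
  case empty
  have "ee {} \<mu> = gg (\<lambda>_. 0)" by (simp add: ee_def gg_def supp_def fun_eq_iff)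
  then show ?case using assms(2) by (intro fsv.span_base) auto
next
  case (insert i S)
  define p where "p = PP (nat (\<mu> i))"
  define h where "h = (\<lambda>a. poly p (vv ^ a))"
  have eq: "ee (insert i S) \<mu> = Mi i h (ee S \<mu>)"
    using insert by (simp add: ee_def Mi_def h_def p_def fun_eq_iff mult.commute)
  show ?case unfolding eq
  proof (rule span_lin_mem[OF Mi_add Mi_fs insert(3)], clarsimp)
    fix j assume j: "\<forall>i. 0 \<le> j i \<and> j i \<le> \<mu> i" "\<forall>k. k \<notin> S \<longrightarrow> j k = 0"
    have ji: "j i = 0" using j insert(2) by auto
    have fin: "finite (supp j)"
      by (rule finite_subset[OF _ insert(1)]) (use j(2) in \<open>auto simp: supp_def\<close>)
    have "Mi i h (gg j) = (\<Sum>a\<le>degree p. fs (coeff p a) (gg (j(i := int a))))"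
      by (auto simp: fun_eq_iff sum_fun_app Mi_def h_def gg_upd[OF fin ji] poly_altdef
           sum_distrib_left power_int_of_nat pow_swap ac_simps)
    also have "\<dots> \<in> fsv.span {gg j |j. (\<forall>i. 0 \<le> j i \<and> j i \<le> \<mu> i) \<and> (\<forall>ia. ia \<noteq> i \<and> ia \<notin> S \<longrightarrow> j ia = 0)}"
    proof (intro fsv.span_sum fsv.span_scale fsv.span_base, clarsimp)
      fix a assume a: "a \<le> degree p"
      show "\<exists>j'. gg (j(i := int a)) = gg j' \<and> (\<forall>i. 0 \<le> j' i \<and> j' i \<le> \<mu> i) \<and> (\<forall>ia. ia \<noteq> i \<and> ia \<notin> S \<longrightarrow> j' ia = 0)"
        using a j assms(2) by (intro exI[of _ "j(i := int a)"]) (auto simp: p_def degree_PP le_nat_iff)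
    qed
    finally show "Mi i h (gg j) \<in> fsv.span {gg j |j. (\<forall>i. 0 \<le> j i \<and> j i \<le> \<mu> i) \<and> (\<forall>ia. ia \<noteq> i \<and> ia \<notin> S \<longrightarrow> j ia = 0)}" .
  qed
qed

lemma otherdir:
  assumes "finite S"
  shows "supp j \<subseteq> S \<Longrightarrow> Rt t (gg j) \<in> fsv.span {Rt t (ee S \<mu>) | \<mu>. (\<forall>i. 0 \<le> \<mu> i \<and> \<mu> i \<le> int t) \<and> (\<forall>i. i \<notin> S \<longrightarrow> \<mu> i = 0)}"
  using assms
proof (induct S arbitrary: j)
  case empty
  then have "j = (\<lambda>_. 0)" by (auto simp: supp_def fun_eq_iff)
  moreover have "gg (\<lambda>_. 0) = ee {} (\<lambda>_. 0)" by (simp add: gg_def ee_def supp_def fun_eq_iff)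
  ultimately have "Rt t (gg j) = Rt t (ee {} (\<lambda>_. 0))" by simp
  then show ?case by (intro fsv.span_base) auto
next
  case (insert i S j)
  define j' where "j' = j(i := 0)"
  have sj': "supp j' \<subseteq> S" using insert(4) by (auto simp: supp_def j'_def)
  have fin: "finite (supp j')" using sj' insert(1) finite_subset by blast
  have jj: "j = j'(i := j i)" by (simp add: j'_def)
  define h where "h = (\<lambda>a. (vv powi j i) ^ a)"
  have eq: "Rt t (gg j) = Mi i h (Rt t (gg j'))"
  proof -
    have g: "gg j l = gg j' l * (vv powi j i) ^ l i" for l
      using gg_upd[OF fin, of i "j i" l] by (simp add: j'_def)
    then have "gg j = (\<lambda>l. gg j' l * (vv powi j i) ^ l i)" by (simp add: fun_eq_iff)
    then show ?thesis unfolding Mi_Rt by (simp add: Mi_def h_def)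
  qed
  obtain d where d: "\<forall>a\<le>t. h a = (\<Sum>b\<le>t. d b * poly (PP b) (vv ^ a))" using newton by blast
  show ?case unfolding eq
  proof (rule span_lin_mem[OF Mi_add Mi_fs insert(3)[OF sj']], clarsimp)
    fix \<mu> assume \<mu>: "\<forall>i. 0 \<le> \<mu> i \<and> \<mu> i \<le> int t" "\<forall>k. k \<notin> S \<longrightarrow> \<mu> k = 0"
    have "Mi i h (Rt t (ee S \<mu>)) = (\<Sum>b\<le>t. fs (d b) (Rt t (ee (insert i S) (\<mu>(i := int b)))))"
    proof (rule ext)
      fix l
      show "Mi i h (Rt t (ee S \<mu>)) l = (\<Sum>b\<le>t. fs (d b) (Rt t (ee (insert i S) (\<mu>(i := int b))))) l"
      proof (cases "l \<in> N_inf \<and> sigma_seq l = t")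
        case True
        then have lt: "l i \<le> t" using le_sigma by blast
        have e: "ee (insert i S) (\<mu>(i := int b)) l = poly (PP b) (vv ^ l i) * ee S \<mu> l" for b
        proof -
          have "(\<Prod>k\<in>S. poly (PP (nat ((\<mu>(i:=int b)) k))) (vv ^ l k)) = (\<Prod>k\<in>S. poly (PP (nat (\<mu> k))) (vv ^ l k))"
            by (rule prod.cong) (use insert(2) in auto)
          then show ?thesis using insert(1,2) by (simp add: ee_def)
        qed
        show ?thesis using True d[rule_format, OF lt]
          by (simp add: Mi_def Rt_def sum_fun_app e sum_distrib_right sum_distrib_left ac_simps)
      next
        case False
        then show ?thesis by (auto simp: Mi_def Rt_def sum_fun_app)
      qed
    qed
    also have "\<dots> \<in> fsv.span {Rt t (ee (insert i S) \<mu>) |\<mu>. (\<forall>i. 0 \<le> \<mu> i \<and> \<mu> i \<le> int t) \<and> (\<forall>ia. ia \<noteq> i \<and> ia \<notin> S \<longrightarrow> \<mu> ia = 0)}"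
    proof (intro fsv.span_sum fsv.span_scale fsv.span_base, clarsimp)
      fix b assume b: "b \<le> t"
      show "\<exists>m. Rt t (ee (insert i S) (\<mu>(i := int b))) = Rt t (ee (insert i S) m) \<and> (\<forall>i. 0 \<le> m i \<and> m i \<le> int t) \<and> (\<forall>ia. ia \<noteq> i \<and> ia \<notin> S \<longrightarrow> m ia = 0)"
        using b \<mu> by (intro exI[of _ "\<mu>(i := int b)"]) auto
    qed
    finally show "Mi i h (Rt t (ee S \<mu>)) \<in> fsv.span {Rt t (ee (insert i S) \<mu>) |\<mu>. (\<forall>i. 0 \<le> \<mu> i \<and> \<mu> i \<le> int t) \<and> (\<forall>ia. ia \<noteq> i \<and> ia \<notin> S \<longrightarrow> \<mu> ia = 0)}" .
  qed
qed


definition WW :: "nat \<Rightarrow> zmat \<Rightarrow> ((int\<Rightarrow>nat) \<Rightarrow> Qv) \<Rightarrow> formal_sum" where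
  "WW r A F = (\<lambda>M. \<Sum>l\<in>{l. l \<in> N_inf \<and> sigma_mat A + sigma_seq l = r \<and> M = (\<lambda>i k. A i k + diagm l i k)}. F l)"

definition GG :: "(int \<Rightarrow> int) \<Rightarrow> (int \<Rightarrow> nat) \<Rightarrow> Qv" where
  "GG j l = vv powi (\<Sum>i\<in>{i. l i \<noteq> 0}. int (l i) * j i)"

lemma Ajr_WW: "Ajr A j r = WW r A (GG j)" by (simp add: Ajr_def WW_def GG_def)

lemma WW_add: "WW r A (x + y) = WW r A x + WW r A y"
  by (simp add: WW_def fun_eq_iff sum.distrib)
lemma WW_fs: "WW r A (fs c x) = fs c (WW r A x)"
  by (simp add: WW_def fun_eq_iff sum_distrib_left)
lemma WW_cong: "(\<And>l. l \<in> N_inf \<Longrightarrow> sigma_mat A + sigma_seq l = r \<Longrightarrow> F l = F' l) \<Longrightarrow> WW r A F = WW r A F'"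
  unfolding WW_def by (intro ext sum.cong) auto
lemma WW_Rt: "WW r A (Rt (r - sigma_mat A) F) = WW r A F"
  by (rule WW_cong) (auto simp: Rt_def)
lemma WW_zero: "(\<And>l. l \<in> N_inf \<Longrightarrow> sigma_mat A + sigma_seq l = r \<Longrightarrow> F l = 0) \<Longrightarrow> WW r A F = 0"
  unfolding WW_def by (simp add: fun_eq_iff)

lemma WW_eval:
  assumes "A \<in> Xi_pm" "A0 \<in> Xi_pm" "l0 \<in> N_inf" "sigma_mat A0 + sigma_seq l0 = r"
  shows "WW r A F (\<lambda>i k. A0 i k + diagm l0 i k) = (if A = A0 then F l0 else 0)"
proof -
  have dA: "A i i = 0" "A0 i i = 0" for i using assms(1,2) by (auto simp: Xi_pm_def)
  have S: "{l. l \<in> N_inf \<and> sigma_mat A + sigma_seq l = r \<and> (\<lambda>i k. A0 i k + diagm l0 i k) = (\<lambda>i k. A i k + diagm l i k)}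
      = (if A = A0 then {l0} else {})" (is "?S = _")
  proof -
    have "A = A0 \<and> l = l0" if "l \<in> ?S" for l
    proof -
      from that have e: "A0 i k + diagm l0 i k = A i k + diagm l i k" for i k
        by (auto simp: fun_eq_iff)
      have "A i k = A0 i k" for i k using e[of i k] dA[of i] by (cases "i = k") (auto simp: diagm_def)
      moreover have "l i = l0 i" for i using e[of i i] dA[of i] by (simp add: diagm_def)
      ultimately show ?thesis by (auto simp: fun_eq_iff)
    qed
    then show ?thesis using assms by auto
  qed
  show ?thesis unfolding WW_def S by simp
qed

lemma sigma_over: "finite U \<Longrightarrow> supp f \<subseteq> U \<Longrightarrow> sigma_seq f = sum f U"
  unfolding sigma_seq_def supp_def by (rule sum.mono_neutral_left) auto

lemma finite_supp_N: "l \<in> N_inf \<Longrightarrow> finite (supp l)"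
  by (simp add: N_inf_def fin_supp_seq_def supp_def)

lemma sig_mono:
  fixes \<mu> :: "int \<Rightarrow> int"
  assumes "finite (supp \<mu>)" "l \<in> N_inf" "\<forall>i. \<mu> i \<le> int (l i)"
  shows "sigma_seq \<mu> \<le> int (sigma_seq l)"
proof -
  let ?U = "supp \<mu> \<union> supp l"
  have f: "finite ?U" using assms finite_supp_N by auto
  have "sigma_seq \<mu> = sum \<mu> ?U" by (rule sigma_over[OF f]) auto
  also have "\<dots> \<le> sum (\<lambda>i. int (l i)) ?U" by (rule sum_mono) (use assms in auto)
  also have "\<dots> = int (sigma_seq l)" using sigma_over[OF f, of l] by simp
  finally show ?thesis .
qed

lemma sig_mono2:
  fixes a b :: "int \<Rightarrow> int"
  assumes "finite (supp a)" "finite (supp b)" "\<forall>i. a i \<le> b i"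
  shows "sigma_seq a \<le> sigma_seq b"
proof -
  let ?U = "supp a \<union> supp b"
  have f: "finite ?U" using assms by auto
  show ?thesis using sigma_over[OF f, of a] sigma_over[OF f, of b] assms(3)
    by (simp add: sum_mono)
qed

lemma sig_strict:
  fixes a b :: "int \<Rightarrow> int"
  assumes "finite (supp a)" "finite (supp b)" "\<forall>i. a i \<le> b i" "a \<noteq> b"
  shows "sigma_seq a < sigma_seq b"
proof -
  let ?U = "supp a \<union> supp b"
  have f: "finite ?U" using assms by auto
  obtain i where i: "a i \<noteq> b i" using assms(4) by auto
  then have iU: "i \<in> ?U" by (auto simp: supp_def)
  have lt: "a i < b i" using assms(3) i by (simp add: order_less_le)
  have "sum a ?U < sum b ?U"
    by (rule sum_strict_mono_ex1[OF f]) (use assms(3) lt iU in auto)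
  then show ?thesis using sigma_over[OF f, of a] sigma_over[OF f, of b] by simp
qed

lemma ee_nz: "finite S \<Longrightarrow> ee S \<mu> l \<noteq> 0 \<longleftrightarrow> (\<forall>i\<in>S. nat (\<mu> i) \<le> l i)"
  by (auto simp: ee_def PP_zero_iff not_less)

lemma GG_gg:
  assumes fj: "finite (supp j)" and l: "l \<in> N_inf"
  shows "GG j l = gg j l"
proof -
  let ?U = "supp l \<union> supp j"
  have f: "finite ?U" using fj finite_supp_N[OF l] by auto
  have s: "(\<Sum>i\<in>{i. l i \<noteq> 0}. int (l i) * j i) = (\<Sum>i\<in>?U. int (l i) * j i)"
    by (rule sum.mono_neutral_left) (use f in \<open>auto simp: supp_def\<close>)
  have p: "vv powi (\<Sum>i\<in>X. f i) = (\<Prod>i\<in>X. vv powi f i)" if "finite X" for X and f :: "int \<Rightarrow> int"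
    using that by (induct X) (auto simp: power_int_add vv_nz)
  have "GG j l = (\<Prod>i\<in>?U. vv powi (int (l i) * j i))" unfolding GG_def s by (rule p[OF f])
  also have "\<dots> = (\<Prod>i\<in>?U. (vv powi j i) ^ l i)"
  proof (rule prod.cong)
    fix i show "vv powi (int (l i) * j i) = (vv powi j i) ^ l i"
      by (metis mult.commute power_int_mult power_int_of_nat)
  qed simp
  also have "\<dots> = gg j l" unfolding gg_def
    by (rule prod.mono_neutral_right) (use f in \<open>auto simp: supp_def\<close>)
  finally show ?thesis .
qed


definition Bset :: "nat \<Rightarrow> formal_sum set" where
  "Bset r = {Ajr A j r | A j. A \<in> Xi_pm \<and> j \<in> Z_inf \<and> (\<forall>i. 0 \<le> j i)
                 \<and> sigma_seq j + int (sigma_mat A) \<le> int r}"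

lemma Ajr_gg: "finite (supp j) \<Longrightarrow> Ajr A j r = WW r A (gg j)"
  unfolding Ajr_WW by (rule WW_cong) (simp add: GG_gg)

lemma spanning:
  assumes A: "A \<in> Xi_pm" and j: "j \<in> Z_inf"
  shows "Ajr A j r \<in> fsv.span (Bset r)"
proof (cases "r < sigma_mat A")
  case True
  have "Ajr A j r = 0" unfolding Ajr_WW by (rule WW_zero) (use True in auto)
  then show ?thesis by (simp add: fsv.span_zero)
next
  case False
  define t where "t = r - sigma_mat A"
  define S where "S = supp j"
  have fS: "finite S" using j by (simp add: S_def Z_inf_def fin_supp_seq_def supp_def)
  have eq: "Ajr A j r = WW r A (Rt t (gg j))"
    unfolding t_def WW_Rt using fS by (simp add: S_def Ajr_gg)
  show ?thesis unfolding eq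
  proof (rule span_lin_mem[OF WW_add WW_fs otherdir[OF fS]], simp add: S_def, clarsimp)
    fix \<mu> assume \<mu>: "\<forall>i. 0 \<le> \<mu> i \<and> \<mu> i \<le> int t" "\<forall>i. i \<notin> S \<longrightarrow> \<mu> i = 0"
    have fmu: "finite (supp \<mu>)" by (rule finite_subset[OF _ fS]) (use \<mu>(2) in \<open>auto simp: supp_def\<close>)
    have e1: "WW r A (Rt t (ee S \<mu>)) = WW r A (ee S \<mu>)" unfolding t_def WW_Rt ..
    show "WW r A (Rt t (ee S \<mu>)) \<in> fsv.span (Bset r)"
    proof (cases "sigma_seq \<mu> \<le> int t")
      case False
      have "WW r A (ee S \<mu>) = 0"
      proof (rule WW_zero)
        fix l assume l: "l \<in> N_inf" "sigma_mat A + sigma_seq l = r"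
        show "ee S \<mu> l = 0"
        proof (rule ccontr)
          assume "ee S \<mu> l \<noteq> 0"
          then have "\<forall>i\<in>S. nat (\<mu> i) \<le> l i" using ee_nz[OF fS] by blast
          then have "\<forall>i. \<mu> i \<le> int (l i)"
          proof (intro allI)
            fix i assume h: "\<forall>i\<in>S. nat (\<mu> i) \<le> l i"
            show "\<mu> i \<le> int (l i)"
            proof (cases "i \<in> S")
              case True
              then have "nat (\<mu> i) \<le> l i" using h by blast
              then show ?thesis by (simp add: nat_le_iff)
            qed (use \<mu>(2) in simp)
          qed
          then have "sigma_seq \<mu> \<le> int (sigma_seq l)" using sig_mono[OF fmu l(1)] by blast
          then show False using False l(2) t_def by linarith
        qed
      qed
      then show ?thesis unfolding e1 by (simp add: fsv.span_zero)
    next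
      case True
      show ?thesis unfolding e1
      proof (rule span_lin_mem[OF WW_add WW_fs polydir[OF fS]], use \<mu> in simp, clarsimp)
        fix j' assume j': "\<forall>i. 0 \<le> j' i \<and> j' i \<le> \<mu> i" "\<forall>i. i \<notin> S \<longrightarrow> j' i = 0"
        have fj': "finite (supp j')" by (rule finite_subset[OF _ fS]) (use j'(2) in \<open>auto simp: supp_def\<close>)
        have "sigma_seq j' \<le> sigma_seq \<mu>" using sig_mono2[OF fj' fmu] j' by blast
        then have "Ajr A j' r \<in> Bset r" unfolding Bset_def using A j' fj' True False t_def
          by (intro CollectI exI[of _ A] exI[of _ j']) (auto simp: Z_inf_def fin_supp_seq_def supp_def)
        then show "WW r A (gg j') \<in> fsv.span (Bset r)" using Ajr_gg[OF fj'] by (simp add: fsv.span_base)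
      qed
    qed
  qed
qed


lemma indep_E:
  assumes finD: "finite D"
    and D: "\<And>A \<mu>. (A,\<mu>) \<in> D \<Longrightarrow> A \<in> Xi_pm \<and> (\<forall>i. 0 \<le> \<mu> i) \<and> finite (supp \<mu>) \<and> sigma_seq \<mu> + int (sigma_mat A) \<le> int r"
    and c: "(\<Sum>d\<in>D. fs (c d) (WW r (fst d) (ee (supp (snd d)) (snd d)))) = 0"
  shows "\<forall>d\<in>D. c d = 0"
proof (rule ccontr)
  assume "\<not> ?thesis"
  then obtain d1 where d1: "d1 \<in> D \<and> c d1 \<noteq> 0" by auto
  obtain d0 where d0: "d0 \<in> D \<and> c d0 \<noteq> 0"
    and min: "\<forall>d. d \<in> D \<and> c d \<noteq> 0 \<longrightarrow> nat (sigma_seq (snd d0)) \<le> nat (sigma_seq (snd d))"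
    using ex_has_least_nat[of "\<lambda>d. d \<in> D \<and> c d \<noteq> 0" d1 "\<lambda>d. nat (sigma_seq (snd d))", OF d1] by blast
  obtain A0 \<mu>0 where d0eq: "d0 = (A0, \<mu>0)" by (cases d0)
  have D0: "A0 \<in> Xi_pm" "\<forall>i. 0 \<le> \<mu>0 i" "finite (supp \<mu>0)" "sigma_seq \<mu>0 + int (sigma_mat A0) \<le> int r"
    using D[of A0 \<mu>0] d0 d0eq by auto
  let ?U = "\<Union>d\<in>D. supp (snd d)"
  have fU: "finite ?U" using finD D by auto
  obtain k where k: "k \<notin> ?U" using ex_new_if_finite[OF infinite_UNIV_int fU] by blast
  define t where "t = r - sigma_mat A0"
  define l0 where "l0 = (\<lambda>i. nat (\<mu>0 i) + (if i = k then t - nat (sigma_seq \<mu>0) else 0))"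
  have kmu0: "k \<notin> supp \<mu>0" using k d0 d0eq by force
  have fI: "finite (insert k (supp \<mu>0))" using D0 by simp
  have sl: "supp l0 \<subseteq> insert k (supp \<mu>0)" by (auto simp: l0_def supp_def)
  have l0N: "l0 \<in> N_inf" using finite_subset[OF sl fI] by (simp add: N_inf_def fin_supp_seq_def supp_def)
  have nsum: "nat (sigma_seq \<mu>0) = (\<Sum>i\<in>supp \<mu>0. nat (\<mu>0 i))"
  proof -
    have "int (\<Sum>i\<in>supp \<mu>0. nat (\<mu>0 i)) = (\<Sum>i\<in>supp \<mu>0. \<mu>0 i)"
      unfolding of_nat_sum by (rule sum.cong) (use D0(2) in auto)
    then have "int (\<Sum>i\<in>supp \<mu>0. nat (\<mu>0 i)) = sigma_seq \<mu>0" by (simp add: sigma_seq_def supp_def)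
    then show ?thesis by linarith
  qed
  have "sigma_seq l0 = (\<Sum>i\<in>insert k (supp \<mu>0). l0 i)" by (rule sigma_over[OF fI sl])
  also have "\<dots> = l0 k + (\<Sum>i\<in>supp \<mu>0. l0 i)" using kmu0 D0(3) by simp
  also have "(\<Sum>i\<in>supp \<mu>0. l0 i) = (\<Sum>i\<in>supp \<mu>0. nat (\<mu>0 i))"
    by (rule sum.cong) (use kmu0 in \<open>auto simp: l0_def\<close>)
  also have "l0 k = t - nat (sigma_seq \<mu>0)" using kmu0 by (simp add: l0_def supp_def)
  finally have "sigma_seq l0 = t - nat (sigma_seq \<mu>0) + nat (sigma_seq \<mu>0)" using nsum by simp
  moreover have nn: "0 \<le> sigma_seq \<mu>0" unfolding sigma_seq_def using D0(2) by (simp add: sum_nonneg)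
  moreover from nn have "int (nat (sigma_seq \<mu>0)) = sigma_seq \<mu>0" by simp
  ultimately have l0s: "sigma_mat A0 + sigma_seq l0 = r" using D0(4) t_def by linarith
  define M0 where "M0 = (\<lambda>i k. A0 i k + diagm l0 i k)"
  have trm: "fs (c d) (WW r (fst d) (ee (supp (snd d)) (snd d))) M0
      = (if d = d0 then c d0 * ee (supp \<mu>0) \<mu>0 l0 else 0)" if dD: "d \<in> D" for d
  proof -
    obtain A \<mu> where deq: "d = (A, \<mu>)" by (cases d)
    have DA: "A \<in> Xi_pm" "\<forall>i. 0 \<le> \<mu> i" "finite (supp \<mu>)" using D[of A \<mu>] dD deq by auto
    have ev: "WW r A (ee (supp \<mu>) \<mu>) M0 = (if A = A0 then ee (supp \<mu>) \<mu> l0 else 0)"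
      unfolding M0_def by (rule WW_eval[OF DA(1) D0(1) l0N l0s])
    show ?thesis
    proof (cases "d = d0")
      case True then show ?thesis using d0eq deq ev by simp
    next
      case False
      show ?thesis
      proof (cases "A = A0 \<and> c d \<noteq> 0 \<and> ee (supp \<mu>) \<mu> l0 \<noteq> 0")
        case True
        then have "\<forall>i\<in>supp \<mu>. nat (\<mu> i) \<le> l0 i" using ee_nz[OF DA(3)] by blast
        moreover have "i \<noteq> k" if "i \<in> supp \<mu>" for i using k dD deq that by force
        ultimately have le0: "\<forall>i. \<mu> i \<noteq> 0 \<longrightarrow> nat (\<mu> i) \<le> nat (\<mu>0 i)"
          by (auto simp: l0_def supp_def)
        have le: "\<forall>i. \<mu> i \<le> \<mu>0 i"
        proof
          fix i show "\<mu> i \<le> \<mu>0 i"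
          proof (cases "\<mu> i = 0")
            case True then show ?thesis using D0(2) by simp
          next
            case False then have "nat (\<mu> i) \<le> nat (\<mu>0 i)" using le0 by blast
            then show ?thesis using D0(2) by (simp add: nat_le_eq_zle)
          qed
        qed
        have ne: "\<mu> \<noteq> \<mu>0" using False True deq d0eq by auto
        have "sigma_seq \<mu> < sigma_seq \<mu>0" by (rule sig_strict[OF DA(3) D0(3) le ne])
        moreover have "nat (sigma_seq \<mu>0) \<le> nat (sigma_seq \<mu>)" using min dD True deq d0eq by auto
        moreover have "0 \<le> sigma_seq \<mu>" unfolding sigma_seq_def using DA(2) by (simp add: sum_nonneg)
        ultimately show ?thesis by linarith
      next
        case False
        then show ?thesis using ev deq \<open>d \<noteq> d0\<close> by auto
      qed
    qed
  qed
  have "0 = (\<Sum>d\<in>D. fs (c d) (WW r (fst d) (ee (supp (snd d)) (snd d)))) M0" using c by simp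
  also have "\<dots> = (\<Sum>d\<in>D. (if d = d0 then c d0 * ee (supp \<mu>0) \<mu>0 l0 else 0))"
    unfolding sum_fun_app by (rule sum.cong[OF refl], rule trm)
  also have "\<dots> = c d0 * ee (supp \<mu>0) \<mu>0 l0" using d0 finD by simp
  finally have "c d0 * ee (supp \<mu>0) \<mu>0 l0 = 0" by simp
  moreover have "ee (supp \<mu>0) \<mu>0 l0 \<noteq> 0" using ee_nz[OF D0(3)] by (simp add: l0_def)
  ultimately show False using d0 by simp
qed


theorem proposition6p8:
  fixes r :: nat
  defines "B \<equiv> {Ajr A j r | A j. A \<in> Xi_pm \<and> j \<in> Z_inf \<and> (\<forall>i. 0 \<le> j i)
                 \<and> sigma_seq j + int (sigma_mat A) \<le> int r}"
  shows "\<not> module.dependent fscale B \<and> module.span fscale B = Vr r"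
proof -
  have BB: "B = Bset r" unfolding B_def Bset_def ..
  define Gen where "Gen = {Ajr A j r | A j. A \<in> Xi_pm \<and> j \<in> Z_inf}"
  have VG: "Vr r = fsv.span Gen" unfolding Vr_def Gen_def fscale_fs ..
  have sp: "fsv.span (Bset r) = Vr r"
  proof
    show "fsv.span (Bset r) \<subseteq> Vr r" unfolding VG by (rule fsv.span_mono) (auto simp: Bset_def Gen_def)
    show "Vr r \<subseteq> fsv.span (Bset r)" unfolding VG
      by (rule fsv.span_minimal) (auto simp: Gen_def intro: spanning)
  qed
  have ind: "\<not> fsv.dependent (Bset r)"
  proof
    assume "fsv.dependent (Bset r)"
    then obtain T u where T: "finite T" "T \<subseteq> Bset r" "(\<Sum>v\<in>T. fs (u v) v) = 0" "\<exists>v\<in>T. u v \<noteq> 0"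
      unfolding fsv.dependent_explicit by blast
    then have Tdep: "fsv.dependent T" unfolding fsv.dependent_explicit by blast
    define Bp where "Bp = {(A,j). A \<in> Xi_pm \<and> j \<in> Z_inf \<and> (\<forall>i. 0 \<le> j i) \<and> sigma_seq j + int (sigma_mat A) \<le> int r}"
    define Gv where "Gv = (\<lambda>d. Ajr (fst d) (snd d) r)"
    have BGv: "Bset r = Gv ` Bp" unfolding Bset_def Bp_def Gv_def by force
    obtain P where P: "P \<subseteq> Bp" "finite P" "T = Gv ` P"
      using finite_subset_image[OF T(1)] T(2) unfolding BGv by metis
    define D where "D = {(A, \<mu>) | A \<mu> j. (A,j) \<in> P \<and> (\<forall>i. 0 \<le> \<mu> i \<and> \<mu> i \<le> j i)}"
    have Dprop: "A \<in> Xi_pm \<and> (\<forall>i. 0 \<le> \<mu> i) \<and> finite (supp \<mu>) \<and> sigma_seq \<mu> + int (sigma_mat A) \<le> int r"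
      if dd: "(A,\<mu>) \<in> D" for A \<mu>
    proof -
      obtain j where j: "(A,j) \<in> P" "\<forall>i. 0 \<le> \<mu> i \<and> \<mu> i \<le> j i" using dd unfolding D_def by blast
      have jB: "A \<in> Xi_pm" "finite (supp j)" "sigma_seq j + int (sigma_mat A) \<le> int r"
        using j(1) P(1) by (auto simp: Bp_def Z_inf_def fin_supp_seq_def supp_def)
      have fm: "finite (supp \<mu>)"
      proof (rule finite_subset[OF _ jB(2)])
        show "supp \<mu> \<subseteq> supp j"
        proof
          fix x assume "x \<in> supp \<mu>"
          then have "\<mu> x \<noteq> 0" by (simp add: supp_def)
          moreover have "0 \<le> \<mu> x \<and> \<mu> x \<le> j x" using j(2) by blast
          ultimately show "x \<in> supp j" by (simp add: supp_def)
        qed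
      qed
      have "sigma_seq \<mu> \<le> sigma_seq j" using sig_mono2[OF fm jB(2)] j(2) by blast
      then show ?thesis using jB fm j(2) by auto
    qed
    have PD: "P \<subseteq> D"
    proof
      fix d assume "d \<in> P"
      then show "d \<in> D" using P(1) unfolding D_def Bp_def by (cases d) auto
    qed
    have Dclosed: "(A,j') \<in> D" if dd: "(A,\<mu>) \<in> D" and jj: "\<forall>i. 0 \<le> j' i \<and> j' i \<le> \<mu> i" for A \<mu> j'
    proof -
      obtain j where j: "(A,j) \<in> P" "\<forall>i. 0 \<le> \<mu> i \<and> \<mu> i \<le> j i" using dd unfolding D_def by blast
      have "\<forall>i. 0 \<le> j' i \<and> j' i \<le> j i"
      proof
        fix i show "0 \<le> j' i \<and> j' i \<le> j i" using j(2) jj by (meson order_trans)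
      qed
      then show ?thesis unfolding D_def using j(1) by blast
    qed
    have finD: "finite D"
    proof -
      let ?F = "\<lambda>d. {\<mu>. \<forall>x. (x \<in> supp (snd d) \<longrightarrow> \<mu> x \<in> (\<Union>y\<in>supp (snd d). {0..snd d y})) \<and> (x \<notin> supp (snd d) \<longrightarrow> \<mu> x = 0)}"
      have "D \<subseteq> (\<Union>d\<in>P. {fst d} \<times> ?F d)"
      proof
        fix e assume "e \<in> D"
        then obtain A \<mu> j where e: "e = (A,\<mu>)" "(A,j) \<in> P" "\<forall>i. 0 \<le> \<mu> i \<and> \<mu> i \<le> j i" by (auto simp: D_def)
        have "\<mu> \<in> ?F (A,j)"
        proof -
          have "\<mu> x \<in> (\<Union>y\<in>supp j. {0..j y})" if "x \<in> supp j" for x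
            using that e(3) by auto
          moreover have "\<mu> x = 0" if "x \<notin> supp j" for x
          proof -
            have "0 \<le> \<mu> x \<and> \<mu> x \<le> j x" using e(3) by blast
            then show ?thesis using that by (simp add: supp_def)
          qed
          ultimately show ?thesis by simp
        qed
        then have "e \<in> {fst (A,j)} \<times> ?F (A,j)" using e(1) by simp
        then show "e \<in> (\<Union>d\<in>P. {fst d} \<times> ?F d)" by (rule UN_I[OF e(2)])
      qed
      moreover have fF: "finite (?F d)" if dP: "d \<in> P" for d
      proof -
        have "finite (supp (snd d))" using dP P(1) by (auto simp: Bp_def Z_inf_def fin_supp_seq_def supp_def)
        then show ?thesis by (intro finite_set_of_finite_funs) auto
      qed
      moreover have "finite (\<Union>d\<in>P. {fst d} \<times> ?F d)"
        by (intro finite_UN_I[OF P(2)] finite_cartesian_product fF) auto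
      ultimately show ?thesis by (meson finite_subset)
    qed
    define E where "E = (\<lambda>d. WW r (fst d) (ee (supp (snd d)) (snd d)))"
    have coef: "\<forall>d\<in>D. c d = 0" if "(\<Sum>d\<in>D. fs (c d) (E d)) = 0" for c
      using indep_E[OF finD, of r c] Dprop that unfolding E_def by blast
    have injE: "inj_on E D"
    proof (rule inj_onI, rule ccontr)
      fix d1 d2 assume d: "d1 \<in> D" "d2 \<in> D" "E d1 = E d2" "d1 \<noteq> d2"
      define c where "c = (\<lambda>d. if d = d1 then 1 else if d = d2 then -1 else (0::Qv))"
      have "(\<Sum>d\<in>D. fs (c d) (E d)) = (\<Sum>d\<in>{d1,d2}. fs (c d) (E d))"
        by (rule sum.mono_neutral_right) (use finD d in \<open>auto simp: c_def fs_def fun_eq_iff\<close>)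
      also have "\<dots> = 0" using d by (simp add: c_def fs_def fun_eq_iff)
      finally have "c d1 = 0" using coef d by blast
      then show False by (simp add: c_def)
    qed
    have indE: "fsv.independent (E ` D)"
      unfolding fsv.dependent_finite[OF finite_imageI[OF finD]]
    proof clarsimp
      fix u d assume u: "(\<Sum>v\<in>E ` D. fs (u v) v) = 0" "d \<in> D" "u (E d) \<noteq> 0"
      have "(\<Sum>d\<in>D. fs ((u \<circ> E) d) (E d)) = 0" using u(1) unfolding sum.reindex[OF injE] by simp
      then show False using coef u(2,3) by force
    qed
    have EG: "E ` D \<subseteq> fsv.span (Gv ` D)"
    proof clarify
      fix A \<mu> assume d: "(A,\<mu>) \<in> D"
      have DP: "A \<in> Xi_pm" "\<forall>i. 0 \<le> \<mu> i" "finite (supp \<mu>)" using Dprop[OF d] by auto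
      show "E (A,\<mu>) \<in> fsv.span (Gv ` D)" unfolding E_def
      proof (simp, rule span_lin_mem[OF WW_add WW_fs polydir[OF DP(3) DP(2)]], clarsimp)
        fix j' assume j': "\<forall>i. 0 \<le> j' i \<and> j' i \<le> \<mu> i" "\<forall>i. i \<notin> supp \<mu> \<longrightarrow> j' i = 0"
        have fj': "finite (supp j')" by (rule finite_subset[OF _ DP(3)]) (use j'(2) in \<open>auto simp: supp_def\<close>)
        have "WW r A (gg j') = Gv (A, j')" using Ajr_gg[OF fj'] by (simp add: Gv_def)
        moreover have "(A,j') \<in> D" by (rule Dclosed[OF d j'(1)])
        ultimately show "WW r A (gg j') \<in> fsv.span (Gv ` D)" by (simp add: fsv.span_base)
      qed
    qed
    have fG: "finite (Gv ` D)" using finD by simp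
    have cE: "card (E ` D) = card D" by (rule card_image[OF injE])
    have cG: "card (Gv ` D) \<le> card D" by (rule card_image_le[OF finD])
    have indG: "fsv.independent (Gv ` D)"
    proof
      assume "fsv.dependent (Gv ` D)"
      then obtain a where a: "a \<in> Gv ` D" "a \<in> fsv.span (Gv ` D - {a})" unfolding fsv.dependent_def by blast
      have "Gv ` D \<subseteq> fsv.span (Gv ` D - {a})"
      proof
        fix x assume "x \<in> Gv ` D"
        then show "x \<in> fsv.span (Gv ` D - {a})" using a(2) by (cases "x = a") (auto intro: fsv.span_base)
      qed
      then have "fsv.span (Gv ` D) \<subseteq> fsv.span (Gv ` D - {a})" by (simp add: fsv.span_minimal)
      then have "E ` D \<subseteq> fsv.span (Gv ` D - {a})" using EG by blast
      then have "card (E ` D) \<le> card (Gv ` D - {a})" using fsv.independent_span_bound[OF _ indE] fG by auto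
      moreover have "card (Gv ` D - {a}) = card (Gv ` D) - 1" using a(1) fG by simp
      moreover have "card (Gv ` D) > 0" using a(1) fG card_gt_0_iff by blast
      ultimately show False using cE cG by linarith
    qed
    have "T \<subseteq> Gv ` D" using P PD by auto
    then have "fsv.independent T" using fsv.independent_mono[OF indG] by blast
    with Tdep show False by simp
  qed
  show ?thesis unfolding fscale_fs BB using ind sp by simp
qed

end
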